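(* Let $N\ge1$, $H=(H_1,\dots,H_N)\in]0,1[^N$, $a\in\mathbb{R}^N\setminus\{(0,\dots,0)\}$, let $S^H$ be the mixed sub-fractional Brownian motion with parameters $N,a,H$, and let $H_{i_0}=\min\{H_i; i\in\{1,\dots,N\},\ a_i\neq0\}$. For all $T>0$ and $\gamma<H_{i_0}$, $S^H$ has a modification whose sample paths are Hölder-continuous of order $\gamma$ on $[0,T]$.
   Context: Let $(\Omega,\mathcal F,\mathbb P)$ be a probability space. For $K\in]0,1[$, a fractional Brownian motion on $\mathbb{R}$ with Hurst index $K$ is a continuous centered Gaussian process $\{B^K(t),t\in\mathbb{R}\}$ with $\mathrm{Cov}(B^K(t),B^K(s))=\frac12(|t|^{2K}+|s|^{2K}-|t-s|^{2K})$. The sub-fractional Brownian motion (sfBm) of index $K$ is $\xi^K_t=(B^K_t+B^K_{-t})/\sqrt2$, $t\ge0$; it is a continuous centered Gaussian process with $\mathrm{Cov}(\xi^K_t,\xi^K_s)=s^{2K}+t^{2K}-\frac12\big((s+t)^{2K}+|t-s|^{2K}\big)$. For $N\ge1$, $H\in]0,1[^N$, $a\in\mathbb{R}^N\setminus\{0\}$, the mixed sub-fractional Brownian motion (msfBm) is $S^H_t=\sum_{i=1}^N a_i\xi^{H_i}(t)$, $t\ge0$, where $\xi^{H_1},\dots,\xi^{H_N}$ are independent sfBms with indices $H_1,\dots,H_N$. *)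

theory Defs
  imports "HOL-Probability.Probability"
begin

definition real_gaussian :: "'a measure \<Rightarrow> ('a \<Rightarrow> real) \<Rightarrow> bool" where
  "real_gaussian M X \<longleftrightarrow> X \<in> borel_measurable M \<and>
     ((\<exists>c. AE \<omega> in M. X \<omega> = c) \<or>
      (\<exists>\<mu> \<sigma>. \<sigma> > 0 \<and> distributed M lborel X (normal_density \<mu> \<sigma>)))"

definition gaussian_process :: "'a measure \<Rightarrow> real set \<Rightarrow> (real \<Rightarrow> 'a \<Rightarrow> real) \<Rightarrow> bool" where
  "gaussian_process M I X \<longleftrightarrow>
     (\<forall>F c. finite F \<longrightarrow> F \<subseteq> I \<longrightarrow> real_gaussian M (\<lambda>\<omega>. \<Sum>t\<in>F. c t * X t \<omega>))"

definition is_fBm :: "'a measure \<Rightarrow> real \<Rightarrow> (real \<Rightarrow> 'a \<Rightarrow> real) \<Rightarrow> bool" where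
  "is_fBm M K B \<longleftrightarrow>
     gaussian_process M UNIV B \<and>
     (\<forall>\<omega>\<in>space M. continuous_on UNIV (\<lambda>t. B t \<omega>)) \<and>
     (\<forall>t. prob_space.expectation M (B t) = 0) \<and>
     (\<forall>s t. prob_space.expectation M (\<lambda>\<omega>. B t \<omega> * B s \<omega>) =
        (\<bar>t\<bar> powr (2*K) + \<bar>s\<bar> powr (2*K) - \<bar>t - s\<bar> powr (2*K)) / 2)"

definition is_sfBm :: "'a measure \<Rightarrow> real \<Rightarrow> (real \<Rightarrow> 'a \<Rightarrow> real) \<Rightarrow> bool" where
  "is_sfBm M K \<xi> \<longleftrightarrow>
     (\<exists>B. is_fBm M K B \<and> (\<forall>t\<ge>0. \<forall>\<omega>\<in>space M. \<xi> t \<omega> = (B t \<omega> + B (-t) \<omega>) / sqrt 2))"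

definition hoelder_on :: "real \<Rightarrow> real set \<Rightarrow> (real \<Rightarrow> real) \<Rightarrow> bool" where
  "hoelder_on g A f \<longleftrightarrow> (\<exists>C. \<forall>s\<in>A. \<forall>t\<in>A. \<bar>f t - f s\<bar> \<le> C * \<bar>t - s\<bar> powr g)"

end

theory Submission
  imports Defs
begin


lemma hoelder_mono_order:
  assumes "hoelder_on g' {a..b} f" "g \<le> g'" "a \<le> b"
  shows "hoelder_on g {a..b} f"
proof -
  obtain C where C: "\<forall>s\<in>{a..b}. \<forall>t\<in>{a..b}. \<bar>f t - f s\<bar> \<le> C * \<bar>t - s\<bar> powr g'"
    using assms(1) unfolding hoelder_on_def by auto
  define D where "D = \<bar>C\<bar> * max 1 ((b - a) powr (g' - g))"
  have "\<bar>f t - f s\<bar> \<le> D * \<bar>t - s\<bar> powr g" if "s\<in>{a..b}" "t\<in>{a..b}" for s t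
  proof (cases "t = s")
    case True then show ?thesis by simp
  next
    case False
    then have pos: "0 < \<bar>t - s\<bar>" by simp
    have le: "\<bar>t - s\<bar> \<le> b - a" using that by auto
    have 1: "\<bar>f t - f s\<bar> \<le> \<bar>C\<bar> * \<bar>t - s\<bar> powr g'"
      using C that by (meson abs_ge_self order_trans mult_right_mono powr_ge_zero)
    have 2: "\<bar>t - s\<bar> powr g' = \<bar>t - s\<bar> powr g * \<bar>t - s\<bar> powr (g' - g)"
      by (simp add: powr_add[symmetric])
    have 3: "\<bar>t - s\<bar> powr (g' - g) \<le> max 1 ((b - a) powr (g' - g))"
      using le pos assms(2) by (meson max.coboundedI2 powr_mono2 diff_ge_0_iff_ge less_imp_le)
    have "\<bar>t - s\<bar> powr g' \<le> \<bar>t - s\<bar> powr g * max 1 ((b - a) powr (g' - g))"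
      unfolding 2 by (intro mult_left_mono 3) simp
    then have "\<bar>C\<bar> * \<bar>t - s\<bar> powr g' \<le> \<bar>C\<bar> * (\<bar>t - s\<bar> powr g * max 1 ((b - a) powr (g' - g)))"
      by (intro mult_left_mono) auto
    with 1 show ?thesis unfolding D_def by (simp add: mult_ac)
  qed
  then show ?thesis unfolding hoelder_on_def by blast
qed




definition dy :: "nat \<Rightarrow> real \<Rightarrow> real" where
  "dy n x = real_of_int \<lfloor>x * 2^n\<rfloor> / 2^n"

lemma dy_props:
  assumes "0 \<le> x"
  shows "0 \<le> dy n x" "dy n x \<le> x" "x - dy n x < 1 / 2^n"
proof -
  have p: "(0::real) < 2^n" by simp
  show "0 \<le> dy n x" unfolding dy_def using assms by simp
  have "real_of_int \<lfloor>x * 2^n\<rfloor> \<le> x * 2^n" by linarith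
  then show "dy n x \<le> x" unfolding dy_def using p by (simp add: divide_le_eq)
  have "x * 2^n < real_of_int \<lfloor>x * 2^n\<rfloor> + 1" by linarith
  then have "x * 2^n - real_of_int \<lfloor>x * 2^n\<rfloor> < 1" by linarith
  then have "(x * 2^n - real_of_int \<lfloor>x * 2^n\<rfloor>) / 2^n < 1 / 2^n" using p
    by (simp add: divide_strict_right_mono)
  then show "x - dy n x < 1 / 2^n" unfolding dy_def using p by (simp add: diff_divide_distrib)
qed

lemma dy_step:
  "dy (Suc n) x = dy n x \<or>
   (\<exists>j::int. dy n x = real_of_int j / 2^(Suc n) \<and> dy (Suc n) x = (real_of_int j+1) / 2^(Suc n))"
proof -
  define m where "m = \<lfloor>x * 2^n\<rfloor>"
  have e: "x * 2^(Suc n) = 2 * (x * 2^n)" by simp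
  have lo: "2*m \<le> \<lfloor>x * 2^(Suc n)\<rfloor>" unfolding e m_def by linarith
  have hi: "\<lfloor>x * 2^(Suc n)\<rfloor> \<le> 2*m + 1" unfolding e m_def by linarith
  have d0: "dy n x = real_of_int (2*m) / 2^(Suc n)" unfolding dy_def m_def by simp
  show ?thesis
  proof (cases "\<lfloor>x * 2^(Suc n)\<rfloor> = 2*m")
    case True
    then show ?thesis using d0 unfolding dy_def by simp
  next
    case False
    then have "\<lfloor>x * 2^(Suc n)\<rfloor> = 2*m + 1" using lo hi by linarith
    then show ?thesis using d0 unfolding dy_def by (intro disjI2 exI[of _ "2*m"]) simp
  qed
qed

lemma dy_tendsto: "0 \<le> x \<Longrightarrow> (\<lambda>k. dy k x) \<longlonglongrightarrow> x"
proof -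
  assume x: "0 \<le> x"
  have "(\<lambda>k. (1/2::real)^k) \<longlonglongrightarrow> 0" by (rule LIMSEQ_power_zero) simp
  then have "(\<lambda>k. x - (1/2::real)^k) \<longlonglongrightarrow> x - 0" by (rule tendsto_diff[OF tendsto_const])
  then have l: "(\<lambda>k. x - (1/2::real)^k) \<longlonglongrightarrow> x" by simp
  show ?thesis
  proof (rule tendsto_sandwich[OF _ _ l tendsto_const])
    show "\<forall>\<^sub>F k in sequentially. x - (1/2) ^ k \<le> dy k x"
      using dy_props(3)[OF x] by (auto simp: power_one_over less_imp_le algebra_simps)
    show "\<forall>\<^sub>F k in sequentially. dy k x \<le> x" using dy_props(2)[OF x] by auto
  qed
qed

definition grid_hyp :: "nat \<Rightarrow> real \<Rightarrow> (real \<Rightarrow> real) \<Rightarrow> bool" where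
  "grid_hyp n0 g f \<longleftrightarrow> (\<forall>n\<ge>n0. \<forall>j::int. 0 \<le> real_of_int j / 2^n \<longrightarrow> (real_of_int j+1) / 2^n \<le> 1 \<longrightarrow>
      \<bar>f ((real_of_int j+1) / 2^n) - f (real_of_int j / 2^n)\<bar> \<le> 2 powr (- real n * g))"

lemma telescope:
  assumes G: "grid_hyp n0 g f" and x: "0 \<le> x" "x \<le> 1" and n: "n0 \<le> n"
  shows "\<bar>f (dy (n+m) x) - f (dy n x)\<bar> \<le> 2 powr (- real n * g) * (\<Sum>i<m. (2 powr (-g))^(i+1))"
proof (induction m)
  case 0 then show ?case by simp
next
  case (Suc m)
  have step: "\<bar>f (dy (Suc (n+m)) x) - f (dy (n+m) x)\<bar> \<le> 2 powr (- real (Suc (n+m)) * g)"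
  proof -
    from dy_step[of "n+m" x] show ?thesis
    proof
      assume "dy (Suc (n + m)) x = dy (n + m) x" then show ?thesis by simp
    next
      assume "\<exists>j::int. dy (n+m) x = real_of_int j / 2^(Suc (n+m)) \<and> dy (Suc (n+m)) x = (real_of_int j+1) / 2^(Suc (n+m))"
      then obtain j :: int where j: "dy (n+m) x = real_of_int j / 2^(Suc (n+m))" "dy (Suc (n+m)) x = (real_of_int j+1) / 2^(Suc (n+m))"
        by blast
      have "0 \<le> real_of_int j / 2^(Suc (n+m))" by (metis j(1) dy_props(1)[OF x(1)])
      moreover have "(real_of_int j+1) / 2^(Suc (n+m)) \<le> 1" using j(2) dy_props(2)[OF x(1), of "Suc (n+m)"] x(2) by linarith
      moreover have "n0 \<le> Suc (n+m)" using n by simp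
      ultimately have "\<bar>f ((real_of_int j+1) / 2^(Suc (n+m))) - f (real_of_int j / 2^(Suc (n+m)))\<bar> \<le> 2 powr (- real (Suc (n+m)) * g)"
        using G unfolding grid_hyp_def by blast
      then show ?thesis unfolding j .
    qed
  qed
  have e: "2 powr (- real (Suc (n+m)) * g) = 2 powr (- real n * g) * (2 powr (-g))^(m+1)"
    by (simp add: powr_power powr_add[symmetric] algebra_simps)
  have "\<bar>f (dy (n + Suc m) x) - f (dy n x)\<bar> \<le> \<bar>f (dy (Suc (n+m)) x) - f (dy (n+m) x)\<bar> + \<bar>f (dy (n+m) x) - f (dy n x)\<bar>"
    by simp
  also have "\<dots> \<le> 2 powr (- real n * g) * (2 powr (-g))^(m+1) + 2 powr (- real n * g) * (\<Sum>i<m. (2 powr (-g))^(i+1))"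
    using step Suc.IH e by linarith
  finally show ?case by (simp add: algebra_simps)
qed

lemma geo_bound:
  fixes q :: real assumes "0 \<le> q" "q < 1"
  shows "(\<Sum>i<m. q^(i+1)) \<le> q / (1 - q)"
proof -
  have "(\<Sum>i<m. q^(i+1)) = q * (\<Sum>i<m. q^i)" by (simp add: sum_distrib_left)
  also have "\<dots> = q * ((1 - q^m) / (1 - q))" using assms by (simp add: sum_gp_strict)
  also have "\<dots> \<le> q * (1 / (1 - q))"
    using assms by (intro mult_left_mono divide_right_mono) auto
  finally show ?thesis by simp
qed

lemma limit_bound:
  assumes G: "grid_hyp n0 g f" and x: "0 \<le> x" "x \<le> 1" and n: "n0 \<le> n"
    and g: "0 < g" and cont: "continuous_on {0..1} f"
  shows "\<bar>f x - f (dy n x)\<bar> \<le> 2 powr (- real n * g) * (2 powr (-g) / (1 - 2 powr (-g)))"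
proof -
  define q where "q = (2::real) powr (-g)"
  have q: "0 \<le> q" "q < 1" unfolding q_def using g by (auto intro: powr_less_one)
  have lim1: "(\<lambda>m. dy (m + n) x) \<longlonglongrightarrow> x"
    using LIMSEQ_ignore_initial_segment[OF dy_tendsto[OF x(1)], of n] .
  have "(\<lambda>m. f (dy (m + n) x)) \<longlonglongrightarrow> f x"
  proof (rule continuous_on_tendsto_compose[OF cont lim1])
    show "x \<in> {0..1}" using x by simp
    show "\<forall>\<^sub>F m in sequentially. dy (m + n) x \<in> {0..1}"
      using x dy_props[OF x(1)] by (auto intro!: always_eventually order_trans[of _ x 1])
  qed
  then have lim: "(\<lambda>m. \<bar>f (dy (n + m) x) - f (dy n x)\<bar>) \<longlonglongrightarrow> \<bar>f x - f (dy n x)\<bar>"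
    by (auto intro!: tendsto_intros simp: add.commute)
  show ?thesis
  proof (rule LIMSEQ_le_const2[OF lim], intro exI allI impI)
    fix m
    have "\<bar>f (dy (n+m) x) - f (dy n x)\<bar> \<le> 2 powr (- real n * g) * (\<Sum>i<m. q^(i+1))"
      using telescope[OF G x n] unfolding q_def .
    also have "\<dots> \<le> 2 powr (- real n * g) * (q / (1 - q))"
      using geo_bound[OF q] by (intro mult_left_mono) auto
    finally show "\<bar>f (dy (n+m) x) - f (dy n x)\<bar> \<le> 2 powr (- real n * g) * (2 powr (-g) / (1 - 2 powr (-g)))"
      unfolding q_def .
  qed
qed

lemma log_floor_bounds:
  fixes y :: real assumes "1 \<le> y"
  defines "n \<equiv> nat \<lfloor>log 2 y\<rfloor>"
  shows "2^n \<le> y" "y < 2^(Suc n)"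
proof -
  have l0: "0 \<le> log 2 y" using assms by simp
  have rn: "real n = real_of_int \<lfloor>log 2 y\<rfloor>" unfolding n_def using l0 by simp
  have a: "real n \<le> log 2 y" using rn by linarith
  have b: "log 2 y < real n + 1" using rn by linarith
  have e1: "(2::real) powr (real n) = 2^n" by (rule powr_realpow) simp
  have e2: "(2::real) powr (real (Suc n)) = 2^(Suc n)" by (rule powr_realpow) simp
  have e3: "(2::real) powr (log 2 y) = y" using assms by simp
  have "(2::real) powr (real n) \<le> 2 powr (log 2 y)" using a by (simp only: powr_le_cancel_iff)
  then show "2^n \<le> y" unfolding e1 e3 .
  have "(2::real) powr (log 2 y) < 2 powr (real (Suc n))" using b by simp
  then show "y < 2^(Suc n)" unfolding e2 e3 .
qed

lemma grid_hoelder: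
  assumes G: "grid_hyp n0 g f" and g: "0 < g" and cont: "continuous_on {0..1} f"
  shows "hoelder_on g {0..1} f"
proof -
  define c where "c = (2::real) powr (-g) / (1 - 2 powr (-g))"
  have c0: "0 \<le> c" unfolding c_def using g powr_less_one[of 2 "-g"] by auto
  have "compact (f ` {0..1})" by (rule compact_continuous_image[OF cont]) simp
  then obtain Bd where Bd: "\<And>x. x \<in> {0..1} \<Longrightarrow> \<bar>f x\<bar> \<le> Bd"
    using compact_imp_bounded bounded_iff by (metis image_eqI real_norm_def)
  define C where "C = max ((2*c+1) * 2 powr g) (2*Bd*2 powr (real n0 * g))"
  have main: "\<bar>f t - f s\<bar> \<le> C * \<bar>t - s\<bar> powr g"
    if st: "s \<in> {0..1}" "t \<in> {0..1}" "s < t" for s t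
  proof (cases "1 / 2^n0 \<le> t - s")
    case True
    have "\<bar>f t - f s\<bar> \<le> 2 * Bd" using Bd st by (smt (verit))
    also have "2 * Bd = 2*Bd*2 powr (real n0 * g) * (1 / 2^n0) powr g"
      by (simp add: powr_divide powr_realpow[symmetric] powr_powr powr_add[symmetric] powr_minus_divide[symmetric] mult.commute)
    also have "\<dots> \<le> 2*Bd*2 powr (real n0 * g) * \<bar>t - s\<bar> powr g"
    proof (rule mult_left_mono)
      show "(1 / 2^n0) powr g \<le> \<bar>t - s\<bar> powr g" using True g by (intro powr_mono2) auto
      show "0 \<le> 2*Bd*2 powr (real n0 * g)" using Bd[of 0] by simp
    qed
    also have "\<dots> \<le> C * \<bar>t - s\<bar> powr g" unfolding C_def by (intro mult_right_mono) auto
    finally show ?thesis .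
  next
    case False
    define y where "y = 1 / (t - s)"
    define n where "n = nat \<lfloor>log 2 y\<rfloor>"
    have ts: "0 < t - s" "t - s \<le> 1" using st by auto
    have y1: "1 \<le> y" unfolding y_def using ts by simp
    have n1: "2^n \<le> y" "y < 2^(Suc n)" using log_floor_bounds[OF y1] unfolding n_def by auto
    have h1: "t - s \<le> 1 / 2^n" using n1(1) ts unfolding y_def by (simp add: field_simps)
    have h2: "1 / 2^(Suc n) < t - s" using n1(2) ts unfolding y_def by (simp add: field_simps)
    have "(2::real)^n0 < y" using False ts unfolding y_def by (simp add: field_simps)
    then have "(2::real)^n0 < 2^(Suc n)" using n1(2) by simp
    then have "n0 < Suc n" by (rule power_less_imp_less_exp[rotated]) simp
    then have nn0: "n0 \<le> n" by simp
    define p where "p = (2::real) powr (- real n * g)"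
    have p0: "0 \<le> p" unfolding p_def by simp
    have bt: "\<bar>f t - f (dy n t)\<bar> \<le> p * c"
      using limit_bound[OF G _ _ nn0 g cont, of t] st unfolding p_def c_def by auto
    have bs: "\<bar>f s - f (dy n s)\<bar> \<le> p * c"
      using limit_bound[OF G _ _ nn0 g cont, of s] st unfolding p_def c_def by auto
    have mid: "\<bar>f (dy n t) - f (dy n s)\<bar> \<le> p"
    proof -
      define ks where "ks = \<lfloor>s * 2^n\<rfloor>"
      define kt where "kt = \<lfloor>t * 2^n\<rfloor>"
      have "t * 2^n - s * 2^n \<le> 1" using h1 by (simp add: field_simps)
      moreover have "s * 2^n \<le> t * 2^n" using st by simp
      ultimately have "kt = ks \<or> kt = ks + 1" unfolding ks_def kt_def by linarith
      then show ?thesis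
      proof
        assume "kt = ks" then show ?thesis using p0 unfolding dy_def kt_def ks_def by simp
      next
        assume e: "kt = ks + 1"
        have ds: "dy n s = real_of_int ks / 2^n" unfolding dy_def ks_def ..
        have dt: "dy n t = (real_of_int ks + 1) / 2^n" unfolding dy_def kt_def[symmetric] e by simp
        have "0 \<le> real_of_int ks / 2^n" using dy_props(1)[of s n] st ds by simp
        moreover have "(real_of_int ks + 1) / 2^n \<le> 1" using dy_props(2)[of t n] st dt by (metis atLeastAtMost_iff order_trans)
        ultimately show ?thesis using G nn0 unfolding grid_hyp_def ds dt p_def by blast
      qed
    qed
    have "\<bar>f t - f s\<bar> \<le> \<bar>f t - f (dy n t)\<bar> + \<bar>f (dy n t) - f (dy n s)\<bar> + \<bar>f s - f (dy n s)\<bar>"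
      by linarith
    also have "\<dots> \<le> (2*c+1) * p" using bt bs mid by (simp add: algebra_simps)
    also have "p = (1 / 2^n) powr g"
      unfolding p_def by (simp add: powr_divide powr_realpow[symmetric] powr_powr powr_minus_divide)
    also have "(1 / 2^n) powr g \<le> (2 * (t - s)) powr g"
      using h2 g by (intro powr_mono2) (auto simp: field_simps)
    also have "(2 * (t - s)) powr g = 2 powr g * \<bar>t - s\<bar> powr g" using ts powr_mult[of 2 "t - s" g] by simp
    finally have "\<bar>f t - f s\<bar> \<le> ((2*c+1) * 2 powr g) * \<bar>t - s\<bar> powr g"
      using c0 by (simp add: mult_left_mono mult.assoc)
    also have "\<dots> \<le> C * \<bar>t - s\<bar> powr g" unfolding C_def by (intro mult_right_mono) auto
    finally show ?thesis .
  qed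
  have "\<bar>f t - f s\<bar> \<le> C * \<bar>t - s\<bar> powr g" if "s \<in> {0..1}" "t \<in> {0..1}" for s t
  proof -
    consider "s < t" | "s = t" | "t < s" by linarith
    then show ?thesis
    proof cases
      case 1 then show ?thesis using main that by blast
    next
      case 2 then show ?thesis by simp
    next
      case 3 then show ?thesis using main[of t s] that by (simp add: abs_minus_commute)
    qed
  qed
  then show ?thesis unfolding hoelder_on_def by blast
qed

lemma scaled_hoelder:
  assumes L: "0 < L" and g: "0 < g" and cont: "continuous_on {u0..u0+L} F"
    and hyp: "\<forall>n\<ge>n0. \<forall>j::nat. j < 2^n \<longrightarrow>
      \<bar>F (u0 + L * ((real j + 1) / 2^n)) - F (u0 + L * (real j / 2^n))\<bar> \<le> 2 powr (- real n * g)"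
  shows "hoelder_on g {u0..u0+L} F"
proof -
  define f where "f x = F (u0 + L * x)" for x
  have cf: "continuous_on {0..1} f" unfolding f_def
  proof (rule continuous_on_compose2[OF cont])
    show "continuous_on {0..1} (\<lambda>x. u0 + L * x)" by (intro continuous_intros)
    show "(\<lambda>x. u0 + L * x) ` {0..1} \<subseteq> {u0..u0 + L}" using L by (auto intro: mult_left_le)
  qed
  have G: "grid_hyp n0 g f" unfolding grid_hyp_def
  proof (intro allI impI)
    fix n :: nat and j :: int
    assume n: "n0 \<le> n" and j0: "0 \<le> real_of_int j / 2^n" and j1: "(real_of_int j + 1) / 2^n \<le> 1"
    have "0 \<le> j" using j0 by (simp add: zero_le_divide_iff) (smt (verit) zero_less_power)
    then have rj: "real (nat j) = real_of_int j" by simp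
    have "real_of_int j + 1 \<le> 2^n" using j1 by simp
    then have "real (nat j) < 2^n" using rj by linarith
    then have "nat j < 2^n" by (metis of_nat_less_iff of_nat_numeral of_nat_power)
    then show "\<bar>f ((real_of_int j + 1) / 2^n) - f (real_of_int j / 2^n)\<bar> \<le> 2 powr (- real n * g)"
      using hyp n unfolding f_def rj[symmetric] by blast
  qed
  obtain C where C: "\<forall>s\<in>{0..1}. \<forall>t\<in>{0..1}. \<bar>f t - f s\<bar> \<le> C * \<bar>t - s\<bar> powr g"
    using grid_hoelder[OF G g cf] unfolding hoelder_on_def by blast
  have "\<bar>F t - F s\<bar> \<le> (C * L powr (-g)) * \<bar>t - s\<bar> powr g" if "s \<in> {u0..u0+L}" "t \<in> {u0..u0+L}" for s t
  proof -
    define x where "x = (s - u0) / L"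
    define y where "y = (t - u0) / L"
    have xy: "x \<in> {0..1}" "y \<in> {0..1}" using that L unfolding x_def y_def by (auto simp: field_simps)
    have fx: "f x = F s" "f y = F t" unfolding f_def x_def y_def using L by auto
    have "\<bar>y - x\<bar> = \<bar>t - s\<bar> / L" proof -
      have "y - x = (t - s) / L" unfolding x_def y_def using L by (simp add: field_simps)
      then show ?thesis using L by (simp add: abs_divide)
    qed
    then have "\<bar>y - x\<bar> powr g = \<bar>t - s\<bar> powr g * L powr (-g)"
      using L by (simp add: powr_divide powr_minus_divide)
    then show ?thesis using C xy fx by (metis mult.assoc mult.commute)
  qed
  then show ?thesis unfolding hoelder_on_def by blast
qed




lemma bound_eq:
  fixes L K g Cp :: real and k n :: nat
  assumes L: "0 < L"
  shows "2^n * (Cp * ((L / 2^n) powr (2*K))^k / (2 powr (- real n * g))^(2*k))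
     = Cp * (L powr (2*K))^k * (2 powr (1 - 2 * real k * (K - g)))^n"
proof -
  have a: "(2::real)^n = 2 powr (real n)" by (simp add: powr_realpow)
  have b: "(L / 2^n) powr (2*K) = L powr (2*K) / 2 powr (real n * (2*K))"
    using L by (simp add: powr_divide a powr_powr)
  have c: "(L powr (2*K) / 2 powr (real n * (2*K)))^k = (L powr (2*K))^k / 2 powr (real k * (real n * (2*K)))"
    by (simp add: power_divide powr_power)
  have d: "(2 powr (- real n * g))^(2*k) = (2::real) powr (real (2*k) * (- real n * g))"
    by (simp add: powr_power)
  have e: "(2 powr (1 - 2 * real k * (K - g)))^n = (2::real) powr (real n * (1 - 2 * real k * (K - g)))"
    by (simp add: powr_power)
  have f: "(2::real) powr (real n) / 2 powr (real k * (real n * (2*K))) / 2 powr (real (2*k) * (- real n * g))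
     = 2 powr (real n * (1 - 2 * real k * (K - g)))"
    by (simp add: powr_diff[symmetric] algebra_simps)
  show ?thesis unfolding b c d e unfolding a
    using f by (simp add: field_simps)
qed




context prob_space begin

lemma gauss_cases:
  assumes G: "real_gaussian M X" and E: "expectation X = 0"
  shows "(AE \<omega> in M. X \<omega> = 0) \<or> (\<exists>\<sigma>>0. distributed M lborel X (normal_density 0 \<sigma>))"
proof -
  have meas: "X \<in> borel_measurable M" using G unfolding real_gaussian_def by blast
  from G consider (c) c where "AE \<omega> in M. X \<omega> = c"
    | (n) \<mu> \<sigma> where "\<sigma> > 0" "distributed M lborel X (normal_density \<mu> \<sigma>)"
    unfolding real_gaussian_def by blast
  then show ?thesis
  proof cases
    case c
    have "expectation X = expectation (\<lambda>_. c)" using c meas by (intro integral_cong_AE) auto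
    then have "c = 0" using E by (simp add: prob_space)
    then show ?thesis using c by simp
  next
    case n
    have "\<mu> = 0" using normal_distributed_expectation[OF n] E by simp
    then show ?thesis using n by auto
  qed
qed

lemma gauss_integrable:
  assumes G: "real_gaussian M X" and E: "expectation X = 0"
  shows "integrable M (\<lambda>\<omega>. X \<omega> ^ n)"
proof -
  have meas: "X \<in> borel_measurable M" using G unfolding real_gaussian_def by blast
  from gauss_cases[OF G E] show ?thesis
  proof
    assume "AE \<omega> in M. X \<omega> = 0"
    then have "AE \<omega> in M. X \<omega> ^ n = (\<lambda>_. 0 ^ n) \<omega>" by auto
    then show ?thesis using meas by (subst integrable_cong_AE) auto
  next
    assume "\<exists>\<sigma>>0. distributed M lborel X (normal_density 0 \<sigma>)"
    then obtain \<sigma> where s: "\<sigma> > 0" "distributed M lborel X (normal_density 0 \<sigma>)" by blast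
    have "integrable lborel (\<lambda>x. normal_density 0 \<sigma> x * x ^ n)"
      using integrable_normal_moment[OF s(1), of 0 n] by simp
    then show ?thesis using distributed_integrable[OF s(2), of "\<lambda>x. x ^ n"] by simp
  qed
qed

lemma gauss_even_moment:
  assumes G: "real_gaussian M X" and E: "expectation X = 0"
  shows "expectation (\<lambda>\<omega>. X \<omega> ^ (2*k)) = fact (2*k) / (2^k * fact k) * (expectation (\<lambda>\<omega>. X \<omega> ^ 2))^k"
proof -
  have meas: "X \<in> borel_measurable M" using G unfolding real_gaussian_def by blast
  from gauss_cases[OF G E] show ?thesis
  proof
    assume a: "AE \<omega> in M. X \<omega> = 0"
    have "expectation (\<lambda>\<omega>. X \<omega> ^ n) = expectation (\<lambda>_. 0 ^ n)" for n
      using a meas by (intro integral_cong_AE) auto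
    then have z: "expectation (\<lambda>\<omega>. X \<omega> ^ n) = 0 ^ n" for n by (simp add: prob_space)
    show ?thesis unfolding z by (cases k) simp_all
  next
    assume "\<exists>\<sigma>>0. distributed M lborel X (normal_density 0 \<sigma>)"
    then obtain \<sigma> where s: "\<sigma> > 0" "distributed M lborel X (normal_density 0 \<sigma>)" by blast
    have m: "expectation (\<lambda>\<omega>. X \<omega> ^ (2*j)) = fact (2 * j) / ((2 / \<sigma>\<^sup>2)^j * fact j)" for j
      using integral_normal_moment_even[OF s(1), of 0 j] distributed_integral[OF s(2), of "\<lambda>x. x ^ (2*j)"]
      by simp
    have m1: "expectation (\<lambda>\<omega>. X \<omega> ^ 2) = \<sigma>\<^sup>2" using m[of 1] s(1) by simp
    show ?thesis unfolding m m1 using s(1) by (simp add: field_simps power_divide power_mult_distrib)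
  qed
qed

lemma gauss_tail:
  assumes G: "real_gaussian M X" and E: "expectation X = 0" and e: "0 < \<epsilon>"
  shows "prob {\<omega>\<in>space M. \<epsilon> \<le> \<bar>X \<omega>\<bar>} \<le>
    fact (2*k) / (2^k * fact k) * (expectation (\<lambda>\<omega>. X \<omega> ^ 2))^k / \<epsilon>^(2*k)"
proof -
  have meas[measurable]: "X \<in> borel_measurable M" using G unfolding real_gaussian_def by blast
  have "{\<omega>\<in>space M. \<epsilon> \<le> \<bar>X \<omega>\<bar>} \<subseteq> {\<omega>\<in>space M. \<epsilon>^(2*k) \<le> X \<omega> ^ (2*k)}"
  proof safe
    fix \<omega> assume "\<epsilon> \<le> \<bar>X \<omega>\<bar>"
    then have "\<epsilon>^(2*k) \<le> \<bar>X \<omega>\<bar>^(2*k)" using e by (intro power_mono) auto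
    then show "\<epsilon>^(2*k) \<le> X \<omega> ^ (2*k)" by (simp add: power_even_abs)
  qed
  then have "prob {\<omega>\<in>space M. \<epsilon> \<le> \<bar>X \<omega>\<bar>} \<le> prob {\<omega>\<in>space M. \<epsilon>^(2*k) \<le> X \<omega> ^ (2*k)}"
    by (intro finite_measure_mono) auto
  also have "\<dots> \<le> expectation (\<lambda>\<omega>. X \<omega> ^ (2*k)) / \<epsilon>^(2*k)"
    by (rule integral_Markov_inequality_measure[OF gauss_integrable[OF G E], where A="space M"])
       (use e in \<open>auto simp: zero_le_even_power\<close>)
  finally show ?thesis unfolding gauss_even_moment[OF G E] .
qed

lemma fBm_gauss:
  assumes "is_fBm M K B"
  shows "real_gaussian M (B t)"
proof -
  have gp: "gaussian_process M UNIV B" using assms unfolding is_fBm_def by simp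
  from gp[unfolded gaussian_process_def, rule_format, of "{t}" "\<lambda>_. 1"] show ?thesis by simp
qed

lemma fBm_meas:
  assumes "is_fBm M K B"
  shows "B t \<in> borel_measurable M"
  using fBm_gauss[OF assms] unfolding real_gaussian_def by blast

lemma fBm_incr:
  assumes fb: "is_fBm M K B" and pq: "p \<noteq> q"
  shows "real_gaussian M (\<lambda>\<omega>. B q \<omega> - B p \<omega>)"
    "expectation (\<lambda>\<omega>. B q \<omega> - B p \<omega>) = 0"
    "expectation (\<lambda>\<omega>. (B q \<omega> - B p \<omega>)^2) = \<bar>q - p\<bar> powr (2*K)"
proof -
  define c where "c u = (if u = q then 1 else - 1::real)" for u
  have gp: "gaussian_process M UNIV B" using fb unfolding is_fBm_def by simp
  have "real_gaussian M (\<lambda>\<omega>. \<Sum>u\<in>{p,q}. c u * B u \<omega>)"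
    using gp[unfolded gaussian_process_def, rule_format, of "{p,q}" c] by simp
  moreover have "(\<lambda>\<omega>. \<Sum>u\<in>{p,q}. c u * B u \<omega>) = (\<lambda>\<omega>. B q \<omega> - B p \<omega>)"
    using pq unfolding c_def by auto
  ultimately show G: "real_gaussian M (\<lambda>\<omega>. B q \<omega> - B p \<omega>)" by simp
  have E0: "expectation (B t) = 0" for t using fb unfolding is_fBm_def by simp
  have cov: "expectation (\<lambda>\<omega>. B t \<omega> * B s \<omega>) =
        (\<bar>t\<bar> powr (2*K) + \<bar>s\<bar> powr (2*K) - \<bar>t - s\<bar> powr (2*K)) / 2" for t s
    using fb unfolding is_fBm_def by simp
  have i1: "integrable M (B t)" for t using gauss_integrable[OF fBm_gauss[OF fb] E0, of t 1] by simp
  have i2: "integrable M (\<lambda>\<omega>. B t \<omega> ^ 2)" for t using gauss_integrable[OF fBm_gauss[OF fb] E0, of t 2] by simp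
  show ED: "expectation (\<lambda>\<omega>. B q \<omega> - B p \<omega>) = 0"
    using i1 E0 by (simp add: Bochner_Integration.integral_diff)
  have iD: "integrable M (\<lambda>\<omega>. (B q \<omega> - B p \<omega>) ^ 2)" using gauss_integrable[OF G ED, of 2] .
  have "integrable M (\<lambda>\<omega>. (B q \<omega> ^ 2 + B p \<omega> ^ 2 - (B q \<omega> - B p \<omega>) ^ 2) / 2)"
    using i2 iD by (intro integrable_divide integrable_diff integrable_add) auto
  moreover have "(\<lambda>\<omega>. (B q \<omega> ^ 2 + B p \<omega> ^ 2 - (B q \<omega> - B p \<omega>) ^ 2) / 2) = (\<lambda>\<omega>. B q \<omega> * B p \<omega>)"
    by (simp add: fun_eq_iff power2_eq_square algebra_simps)
  ultimately have ip: "integrable M (\<lambda>\<omega>. B q \<omega> * B p \<omega>)" by simp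
  have "(\<lambda>\<omega>. (B q \<omega> - B p \<omega>)^2) = (\<lambda>\<omega>. (B q \<omega> * B q \<omega> + B p \<omega> * B p \<omega>) - 2 * (B q \<omega> * B p \<omega>))"
    by (simp add: fun_eq_iff power2_eq_square algebra_simps)
  moreover have "integrable M (\<lambda>\<omega>. B t \<omega> * B t \<omega>)" for t using i2[of t] by (simp add: power2_eq_square)
  ultimately have "expectation (\<lambda>\<omega>. (B q \<omega> - B p \<omega>)^2) =
     expectation (\<lambda>\<omega>. B q \<omega> * B q \<omega>) + expectation (\<lambda>\<omega>. B p \<omega> * B p \<omega>) - 2 * expectation (\<lambda>\<omega>. B q \<omega> * B p \<omega>)"
    using ip by (simp add: Bochner_Integration.integral_diff Bochner_Integration.integral_add)
  also have "\<dots> = \<bar>q - p\<bar> powr (2*K)" unfolding cov by (simp add: field_simps)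
  finally show "expectation (\<lambda>\<omega>. (B q \<omega> - B p \<omega>)^2) = \<bar>q - p\<bar> powr (2*K)" .
qed

end

context prob_space begin

lemma fBm_grid:
  assumes fb: "is_fBm M K B" and g: "0 < g" "g < K" and L: "0 < L"
  shows "AE \<omega> in M. \<exists>n0. \<forall>n\<ge>n0. \<forall>j::nat. j < 2^n \<longrightarrow>
      \<bar>B (u0 + L * ((real j + 1) / 2^n)) \<omega> - B (u0 + L * (real j / 2^n)) \<omega>\<bar> \<le> 2 powr (- real n * g)"
proof -
  define p where "p n j = u0 + L * (real j / 2^n)" for n :: nat and j :: nat
  define p' where "p' n j = u0 + L * ((real j + 1) / 2^n)" for n :: nat and j :: nat
  define A where "A n = (\<Union>j<(2::nat)^n. {\<omega>\<in>space M. 2 powr (- real n * g) < \<bar>B (p' n j) \<omega> - B (p n j) \<omega>\<bar>})" for n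
  have Bm[measurable]: "B t \<in> borel_measurable M" for t by (rule fBm_meas[OF fb])
  have Am[measurable]: "A n \<in> sets M" for n unfolding A_def by measurable
  obtain k :: nat where k: "1 / (K - g) < real k" using reals_Archimedean2 by blast
  have kK: "1 < real k * (K - g)" using k g by (simp add: field_simps)
  define Cp :: real where "Cp = fact (2*k) / (2^k * fact k)"
  define \<rho> where "\<rho> = (2::real) powr (1 - 2 * real k * (K - g))"
  have \<rho>: "0 \<le> \<rho>" "\<rho> < 1" unfolding \<rho>_def using kK by (auto intro!: powr_less_one)
  have dist: "p' n j \<noteq> p n j" for n j unfolding p_def p'_def using L by (simp add: field_simps)
  have diff: "\<bar>p' n j - p n j\<bar> = L / 2^n" for n j unfolding p_def p'_def using L by (simp add: field_simps)
  have ev: "prob {\<omega>\<in>space M. 2 powr (- real n * g) < \<bar>B (p' n j) \<omega> - B (p n j) \<omega>\<bar>}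
      \<le> Cp * ((L / 2^n) powr (2*K))^k / (2 powr (- real n * g))^(2*k)" for n j
  proof -
    have "prob {\<omega>\<in>space M. 2 powr (- real n * g) < \<bar>B (p' n j) \<omega> - B (p n j) \<omega>\<bar>}
        \<le> prob {\<omega>\<in>space M. 2 powr (- real n * g) \<le> \<bar>B (p' n j) \<omega> - B (p n j) \<omega>\<bar>}"
      by (intro finite_measure_mono) auto
    also have "\<dots> \<le> Cp * (expectation (\<lambda>\<omega>. (B (p' n j) \<omega> - B (p n j) \<omega>)^2))^k / (2 powr (- real n * g))^(2*k)"
      unfolding Cp_def by (rule gauss_tail[OF fBm_incr(1,2)[OF fb dist[symmetric]]]) simp
    also have "expectation (\<lambda>\<omega>. (B (p' n j) \<omega> - B (p n j) \<omega>)^2) = (L / 2^n) powr (2*K)"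
      using fBm_incr(3)[OF fb dist[symmetric]] diff by simp
    finally show ?thesis .
  qed
  have mA: "measure M (A n) \<le> Cp * (L powr (2*K))^k * \<rho>^n" for n
  proof -
    have "measure M (A n) \<le> (\<Sum>j<(2::nat)^n. prob {\<omega>\<in>space M. 2 powr (- real n * g) < \<bar>B (p' n j) \<omega> - B (p n j) \<omega>\<bar>})"
      unfolding A_def by (intro finite_measure_subadditive_finite) auto
    also have "\<dots> \<le> (\<Sum>j<(2::nat)^n. Cp * ((L / 2^n) powr (2*K))^k / (2 powr (- real n * g))^(2*k))"
      by (intro sum_mono ev)
    also have "\<dots> = 2^n * (Cp * ((L / 2^n) powr (2*K))^k / (2 powr (- real n * g))^(2*k))" by simp
    also have "\<dots> = Cp * (L powr (2*K))^k * \<rho>^n" unfolding \<rho>_def by (rule bound_eq[OF L])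
    finally show ?thesis .
  qed
  have "summable (\<lambda>n. Cp * (L powr (2*K))^k * \<rho>^n)"
    using \<rho> by (intro summable_mult summable_geometric) simp
  then have sA: "summable (\<lambda>n. measure M (A n))"
    by (rule summable_comparison_test'[where N=0]) (use mA in simp)
  have "AE \<omega> in M. eventually (\<lambda>n. \<omega> \<in> space M - A n) sequentially"
    by (rule borel_cantelli_AE1[OF Am _ sA]) (simp add: less_top[symmetric])
  then show ?thesis
  proof (rule AE_mp, intro AE_I2 impI)
    fix \<omega> assume \<omega>: "\<omega> \<in> space M" and "eventually (\<lambda>n. \<omega> \<in> space M - A n) sequentially"
    then obtain n0 where n0: "\<And>n. n \<ge> n0 \<Longrightarrow> \<omega> \<notin> A n" unfolding eventually_sequentially by blast
    show "\<exists>n0. \<forall>n\<ge>n0. \<forall>j::nat. j < 2^n \<longrightarrow>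
      \<bar>B (u0 + L * ((real j + 1) / 2^n)) \<omega> - B (u0 + L * (real j / 2^n)) \<omega>\<bar> \<le> 2 powr (- real n * g)"
    proof (intro exI allI impI)
      fix n j :: nat assume "n0 \<le> n" "j < 2^n"
      then show "\<bar>B (u0 + L * ((real j + 1) / 2^n)) \<omega> - B (u0 + L * (real j / 2^n)) \<omega>\<bar> \<le> 2 powr (- real n * g)"
        using n0 \<omega> unfolding A_def p_def p'_def by (auto simp: not_less)
    qed
  qed
qed

end

lemma hoelder_add:
  assumes "hoelder_on g A f" "hoelder_on g A h"
  shows "hoelder_on g A (\<lambda>t. f t + h t)"
proof -
  obtain C1 where C1: "\<forall>s\<in>A. \<forall>t\<in>A. \<bar>f t - f s\<bar> \<le> C1 * \<bar>t - s\<bar> powr g" using assms(1) unfolding hoelder_on_def by blast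
  obtain C2 where C2: "\<forall>s\<in>A. \<forall>t\<in>A. \<bar>h t - h s\<bar> \<le> C2 * \<bar>t - s\<bar> powr g" using assms(2) unfolding hoelder_on_def by blast
  have "\<bar>(f t + h t) - (f s + h s)\<bar> \<le> (C1 + C2) * \<bar>t - s\<bar> powr g" if "s \<in> A" "t \<in> A" for s t
    using C1 C2 that by (smt (verit, best) distrib_right)
  then show ?thesis unfolding hoelder_on_def by blast
qed

lemma hoelder_scale:
  assumes "hoelder_on g A f"
  shows "hoelder_on g A (\<lambda>t. c * f t)"
proof -
  obtain C where C: "\<forall>s\<in>A. \<forall>t\<in>A. \<bar>f t - f s\<bar> \<le> C * \<bar>t - s\<bar> powr g" using assms unfolding hoelder_on_def by blast
  have "\<bar>c * f t - c * f s\<bar> \<le> (\<bar>c\<bar> * C) * \<bar>t - s\<bar> powr g" if "s \<in> A" "t \<in> A" for s t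
  proof -
    have "\<bar>c * f t - c * f s\<bar> = \<bar>c\<bar> * \<bar>f t - f s\<bar>" by (simp add: abs_mult flip: right_diff_distrib)
    also have "\<dots> \<le> \<bar>c\<bar> * (C * \<bar>t - s\<bar> powr g)" using C that by (intro mult_left_mono) auto
    finally show ?thesis by (simp add: mult.assoc)
  qed
  then show ?thesis unfolding hoelder_on_def by blast
qed

lemma hoelder_const: "hoelder_on g A (\<lambda>t. c)"
  unfolding hoelder_on_def by (intro exI[of _ 0]) simp

lemma hoelder_sum:
  assumes "finite I" "\<And>i. i \<in> I \<Longrightarrow> hoelder_on g A (F i)"
  shows "hoelder_on g A (\<lambda>t. \<Sum>i\<in>I. F i t)"
  using assms
proof (induction I rule: finite_induct)
  case empty then show ?case by (simp add: hoelder_const)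
next
  case (insert x I)
  then show ?case by (simp add: hoelder_add)
qed

context prob_space begin

lemma fBm_hoelder:
  assumes fb: "is_fBm M K B" and g: "0 < g" "g < K" and L: "0 < L"
  shows "AE \<omega> in M. hoelder_on g {u0..u0+L} (\<lambda>t. B t \<omega>)"
  using fBm_grid[OF fb g L, of u0]
proof (rule AE_mp, intro AE_I2 impI)
  fix \<omega> assume \<omega>: "\<omega> \<in> space M" and
    h: "\<exists>n0. \<forall>n\<ge>n0. \<forall>j::nat. j < 2^n \<longrightarrow>
      \<bar>B (u0 + L * ((real j + 1) / 2^n)) \<omega> - B (u0 + L * (real j / 2^n)) \<omega>\<bar> \<le> 2 powr (- real n * g)"
  then obtain n0 where n0: "\<forall>n\<ge>n0. \<forall>j::nat. j < 2^n \<longrightarrow>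
      \<bar>B (u0 + L * ((real j + 1) / 2^n)) \<omega> - B (u0 + L * (real j / 2^n)) \<omega>\<bar> \<le> 2 powr (- real n * g)" by blast
  have "continuous_on UNIV (\<lambda>t. B t \<omega>)" using fb \<omega> unfolding is_fBm_def by blast
  then have c: "continuous_on {u0..u0+L} (\<lambda>t. B t \<omega>)" by (rule continuous_on_subset) simp
  show "hoelder_on g {u0..u0+L} (\<lambda>t. B t \<omega>)" by (rule scaled_hoelder[OF L g(1) c n0])
qed

lemma sfBm_hoelder:
  assumes sf: "is_sfBm M K \<xi>" and g: "0 < g" "g < K" and T: "0 < T"
  shows "AE \<omega> in M. hoelder_on g {0..T} (\<lambda>t. \<xi> t \<omega>)"
proof -
  obtain B where fb: "is_fBm M K B" and xi: "\<forall>t\<ge>0. \<forall>\<omega>\<in>space M. \<xi> t \<omega> = (B t \<omega> + B (-t) \<omega>) / sqrt 2"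
    using sf unfolding is_sfBm_def by blast
  have L: "0 < 2 * T" using T by simp
  show ?thesis
    using fBm_hoelder[OF fb g L, of "-T"]
  proof (rule AE_mp, intro AE_I2 impI)
    fix \<omega> assume \<omega>: "\<omega> \<in> space M" and h: "hoelder_on g {-T..-T + 2*T} (\<lambda>t. B t \<omega>)"
    obtain C where C: "\<forall>s\<in>{-T..-T + 2*T}. \<forall>t\<in>{-T..-T + 2*T}. \<bar>B t \<omega> - B s \<omega>\<bar> \<le> C * \<bar>t - s\<bar> powr g"
      using h unfolding hoelder_on_def by blast
    have "\<bar>\<xi> t \<omega> - \<xi> s \<omega>\<bar> \<le> (2 * C / sqrt 2) * \<bar>t - s\<bar> powr g" if st: "s \<in> {0..T}" "t \<in> {0..T}" for s t
    proof -
      have m: "s \<in> {-T..-T + 2*T}" "t \<in> {-T..-T + 2*T}" "-s \<in> {-T..-T + 2*T}" "-t \<in> {-T..-T + 2*T}"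
        using st by auto
      have 1: "\<bar>B t \<omega> - B s \<omega>\<bar> \<le> C * \<bar>t - s\<bar> powr g" using C m by blast
      have "\<bar>B (-t) \<omega> - B (-s) \<omega>\<bar> \<le> C * \<bar>-t - -s\<bar> powr g" using C m by blast
      then have 2: "\<bar>B (-t) \<omega> - B (-s) \<omega>\<bar> \<le> C * \<bar>t - s\<bar> powr g" by (simp add: abs_minus_commute)
      have "\<xi> t \<omega> - \<xi> s \<omega> = ((B t \<omega> - B s \<omega>) + (B (-t) \<omega> - B (-s) \<omega>)) / sqrt 2"
        using xi st \<omega> by (simp add: diff_divide_distrib[symmetric] algebra_simps)
      then have "\<bar>\<xi> t \<omega> - \<xi> s \<omega>\<bar> = \<bar>(B t \<omega> - B s \<omega>) + (B (-t) \<omega> - B (-s) \<omega>)\<bar> / sqrt 2"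
        by (simp add: abs_divide)
      also have "\<dots> \<le> (2 * C * \<bar>t - s\<bar> powr g) / sqrt 2"
        using 1 2 by (intro divide_right_mono) auto
      finally show ?thesis by simp
    qed
    then show "hoelder_on g {0..T} (\<lambda>t. \<xi> t \<omega>)" unfolding hoelder_on_def by blast
  qed
qed

lemma sfBm_meas:
  assumes sf: "is_sfBm M K \<xi>" and t: "0 \<le> t"
  shows "\<xi> t \<in> borel_measurable M"
proof -
  obtain B where fb: "is_fBm M K B" and xi: "\<forall>t\<ge>0. \<forall>\<omega>\<in>space M. \<xi> t \<omega> = (B t \<omega> + B (-t) \<omega>) / sqrt 2"
    using sf unfolding is_sfBm_def by blast
  have [measurable]: "B u \<in> borel_measurable M" for u by (rule fBm_meas[OF fb])
  have "(\<lambda>\<omega>. (B t \<omega> + B (-t) \<omega>) / sqrt 2) \<in> borel_measurable M" by measurable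
  then show ?thesis by (rule measurable_cong[THEN iffD1, rotated]) (use xi t in auto)
qed

end

theorem lemma12:
  fixes M :: "'a measure" and N :: nat and H a :: "nat \<Rightarrow> real"
    and \<xi> :: "nat \<Rightarrow> real \<Rightarrow> 'a \<Rightarrow> real" and T \<gamma> :: real
  assumes "prob_space M"
    and "N \<ge> 1"
    and "\<forall>i<N. 0 < H i \<and> H i < 1"
    and "\<exists>i<N. a i \<noteq> 0"
    and "\<forall>i<N. is_sfBm M (H i) (\<xi> i)"
    and "prob_space.indep_vars M (\<lambda>_. PiM {0..} (\<lambda>_. borel))
           (\<lambda>i \<omega>. restrict (\<lambda>t. \<xi> i t \<omega>) {0..}) {..<N}"
    and "T > 0"
    and "\<gamma> < Min {H i | i. i < N \<and> a i \<noteq> 0}"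
  shows "\<exists>Y :: real \<Rightarrow> 'a \<Rightarrow> real.
           (\<forall>t\<ge>0. Y t \<in> borel_measurable M) \<and>
           (\<forall>t\<ge>0. AE \<omega> in M. Y t \<omega> = (\<Sum>i<N. a i * \<xi> i t \<omega>)) \<and>
           (\<forall>\<omega>\<in>space M. hoelder_on \<gamma> {0..T} (\<lambda>t. Y t \<omega>))"
proof -
  interpret prob_space M by fact
  define S where "S = {H i | i. i < N \<and> a i \<noteq> 0}"
  define H0 where "H0 = Min S"
  have Sfin: "finite S" unfolding S_def by simp
  have Sne: "S \<noteq> {}" using assms(4) unfolding S_def by blast
  have H0S: "H0 \<in> S" unfolding H0_def using Min_in[OF Sfin Sne] .
  have H0pos: "0 < H0" using H0S assms(3) unfolding S_def by auto
  have H0le: "H0 \<le> H i" if "i < N" "a i \<noteq> 0" for i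
    unfolding H0_def using Min_le[OF Sfin] that unfolding S_def by blast
  define g where "g = (max \<gamma> 0 + H0) / 2"
  have g: "0 < g" "\<gamma> \<le> g" "g < H0" using H0pos assms(8) unfolding g_def S_def[symmetric] H0_def[symmetric]
    by auto
  define I where "I = {i. i < N \<and> a i \<noteq> 0}"
  have "AE \<omega> in M. \<forall>i\<in>I. hoelder_on g {0..T} (\<lambda>t. \<xi> i t \<omega>)"
  proof (rule AE_finite_allI)
    show "finite I" unfolding I_def by simp
    fix i assume i: "i \<in> I"
    then have "g < H i" using H0le g unfolding I_def by fastforce
    then show "AE \<omega> in M. hoelder_on g {0..T} (\<lambda>t. \<xi> i t \<omega>)"
      using sfBm_hoelder[of "H i" "\<xi> i" g T] assms(5,7) g i unfolding I_def by auto
  qed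
  then obtain N0 where N0: "\<And>\<omega>. \<omega> \<in> space M - N0 \<Longrightarrow> \<forall>i\<in>I. hoelder_on g {0..T} (\<lambda>t. \<xi> i t \<omega>)"
    and N0n: "N0 \<in> null_sets M" by (rule AE_E3) blast
  have N0s[measurable]: "N0 \<in> sets M" using N0n by auto
  define Y where "Y t \<omega> = (if \<omega> \<in> N0 then 0 else (\<Sum>i<N. a i * \<xi> i t \<omega>))" for t \<omega>
  show ?thesis
  proof (intro exI[of _ Y] conjI allI impI ballI)
    fix t :: real assume t: "0 \<le> t"
    have [measurable]: "\<xi> i t \<in> borel_measurable M" if "i < N" for i
      using sfBm_meas[of "H i" "\<xi> i" t] assms(5) t that by auto
    have "(\<lambda>\<omega>. \<Sum>i<N. a i * \<xi> i t \<omega>) \<in> borel_measurable M"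
      by (intro borel_measurable_sum borel_measurable_times borel_measurable_const) auto
    then show "Y t \<in> borel_measurable M" unfolding Y_def by measurable
    show "AE \<omega> in M. Y t \<omega> = (\<Sum>i<N. a i * \<xi> i t \<omega>)"
      using AE_not_in[OF N0n] by eventually_elim (simp add: Y_def)
  next
    fix \<omega> assume \<omega>: "\<omega> \<in> space M"
    show "hoelder_on \<gamma> {0..T} (\<lambda>t. Y t \<omega>)"
    proof (cases "\<omega> \<in> N0")
      case True
      then show ?thesis unfolding Y_def by (simp add: hoelder_const)
    next
      case False
      have "hoelder_on g {0..T} (\<lambda>t. a i * \<xi> i t \<omega>)" if "i \<in> {..<N}" for i
      proof (cases "a i = 0")
        case True then show ?thesis by (simp add: hoelder_const)
      next
        case False
        then have "i \<in> I" using that unfolding I_def by auto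
        then show ?thesis using N0[of \<omega>] \<open>\<omega> \<notin> N0\<close> \<omega> by (intro hoelder_scale) auto
      qed
      then have "hoelder_on g {0..T} (\<lambda>t. \<Sum>i<N. a i * \<xi> i t \<omega>)" by (intro hoelder_sum) auto
      then have "hoelder_on \<gamma> {0..T} (\<lambda>t. \<Sum>i<N. a i * \<xi> i t \<omega>)"
        by (rule hoelder_mono_order) (use g assms(7) in auto)
      then show ?thesis unfolding Y_def using False by simp
    qed
  qed
qed

end
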